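(* Let $\gamma\ge1$, $t\ge1$ an integer, $\varepsilon\in(0,1)$, and $B$ with $\gamma t\le B\le|A|$. Let $(x,y,p)$ be a $\gamma t$-SLEO with income distribution $\mathcal{I}$ uniform on $[1-\varepsilon,1]$ and total budget $B$, and let $C\subseteq A$ with $|C|\ge t$ contain every $a\in A$ with $y_a=1$. Then for every $c\in A\setminus C$: (i) $\sum_{v\in V}p_{v,c}\le \gamma t\cdot|V|\cdot\frac1B\cdot\mathbb{E}_{b\sim\mathcal{I}}[b]$; (ii) the number of voters $v$ that are $t$-covered by $C$ and satisfy $c\succ_v^t C$ is at most $\frac{\gamma t}{B(1-\varepsilon)}\cdot|V|$.
   Context: An election $(V,A,\succ)$: finite nonempty voter set $V$, finite candidate set $A$, strict linear order $\succ_v$ on $A$ per voter, extended to $A\cup\{\emptyset\}$ with $\emptyset$ strictly below all candidates. For $C\subseteq A$ with $|C|\ge t$ and $a\in A\setminus C$: $C\succ_v^t a$ iff $|\{c\in C: c\succ_v a\}|\ge t$, otherwise $a\succ_v^t C$. Given prices $p_v\in[0,1]^{A\cup\{\emptyset\}}$ with $p_{v,\emptyset}=0$ and income $b\ge0$, voter $v$'s demand is the $\succ_v$-maximal element of $\{a\in A\cup\{\emptyset\}: p_{v,a}\le b\}$; $\mathcal{D}_v(p_v,\mathcal{I})$ is this demand with $b\sim\mathcal{I}$. For $s>0$, $B>0$, an $s$-SLEO $(x,y,p)$ with income $\mathcal{I}$ and budget $B$: prices $p_v\in[0,1]^{A\cup\{\emptyset\}}$ with $p_{v,\emptyset}=0$,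 consumptions $x_v\in[0,1]^{A\cup\{\emptyset\}}$, and $y\in[0,1]^A$, with (1) $x_{v,a}=\Pr[\mathcal{D}_v(p_v,\mathcal{I})=a]$ for all $a\in A\cup\{\emptyset\}$; (2) $s\,x_{v,a}\le y_a$ for all $a\in A$, and $p_{v,a}=0$ whenever $s\,x_{v,a}<y_a$; (3) $y$ maximizes $\sum_a(\sum_v p_{v,a})z_a$ over $z\in[0,1]^A$ with $\sum_a z_a=B$. The boundary candidate of $v$ is $a_v=$ the $\succ_v$-maximal element of $\{a\in A\cup\{\emptyset\}: p_{v,a}\le1-\varepsilon\}$. A voter $v$ is $t$-covered by $C$ if $|\{c\in C: c\succ_v a_v\}|\ge t$. *)

theory Defs
  imports "HOL-Probability.Probability"
begin

text \<open>Candidates have type 'a; the option type models A \<union> {\<emptyset>} with None = \<emptyset>.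
  pref v a b means a \<succ>_v b (a strictly preferred to b by voter v).\<close>

definition strict_linear_on :: "'a set \<Rightarrow> ('a \<Rightarrow> 'a \<Rightarrow> bool) \<Rightarrow> bool" where
  "strict_linear_on A r \<longleftrightarrow>
     (\<forall>a\<in>A. \<not> r a a) \<and>
     (\<forall>a\<in>A. \<forall>b\<in>A. \<forall>c\<in>A. r a b \<longrightarrow> r b c \<longrightarrow> r a c) \<and>
     (\<forall>a\<in>A. \<forall>b\<in>A. a \<noteq> b \<longrightarrow> r a b \<or> r b a)"

definition election :: "'v set \<Rightarrow> 'a set \<Rightarrow> ('v \<Rightarrow> 'a \<Rightarrow> 'a \<Rightarrow> bool) \<Rightarrow> bool" where
  "election V A pref \<longleftrightarrow> finite V \<and> V \<noteq> {} \<and> finite A \<and>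
     (\<forall>v\<in>V. strict_linear_on A (pref v))"

fun ext_pref :: "('v \<Rightarrow> 'a \<Rightarrow> 'a \<Rightarrow> bool) \<Rightarrow> 'v \<Rightarrow> 'a option \<Rightarrow> 'a option \<Rightarrow> bool" where
  "ext_pref pref v (Some a) (Some b) = pref v a b"
| "ext_pref pref v (Some a) None = True"
| "ext_pref pref v None _ = False"

definition pref_max :: "('v \<Rightarrow> 'a \<Rightarrow> 'a \<Rightarrow> bool) \<Rightarrow> 'v \<Rightarrow> 'a option set \<Rightarrow> 'a option" where
  "pref_max pref v S = (THE m. m \<in> S \<and> (\<forall>w\<in>S. w \<noteq> m \<longrightarrow> ext_pref pref v m w))"

definition affordable :: "'a set \<Rightarrow> ('a option \<Rightarrow> real) \<Rightarrow> real \<Rightarrow> 'a option set" where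
  "affordable A pv b = {w \<in> insert None (Some ` A). pv w \<le> b}"

definition demand :: "'a set \<Rightarrow> ('v \<Rightarrow> 'a \<Rightarrow> 'a \<Rightarrow> bool) \<Rightarrow> ('v \<Rightarrow> 'a option \<Rightarrow> real)
    \<Rightarrow> 'v \<Rightarrow> real \<Rightarrow> 'a option" where
  "demand A pref p v b = pref_max pref v (affordable A (p v) b)"

definition SLEO :: "'v set \<Rightarrow> 'a set \<Rightarrow> ('v \<Rightarrow> 'a \<Rightarrow> 'a \<Rightarrow> bool) \<Rightarrow> real \<Rightarrow> real measure \<Rightarrow> real
    \<Rightarrow> ('v \<Rightarrow> 'a option \<Rightarrow> real) \<Rightarrow> ('a \<Rightarrow> real) \<Rightarrow> ('v \<Rightarrow> 'a option \<Rightarrow> real) \<Rightarrow> bool" where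
  "SLEO V A pref s I B x y p \<longleftrightarrow>
     (\<forall>v\<in>V. p v None = 0 \<and> (\<forall>a\<in>A. 0 \<le> p v (Some a) \<and> p v (Some a) \<le> 1)) \<and>
     (\<forall>v\<in>V. \<forall>w\<in>insert None (Some ` A). 0 \<le> x v w \<and> x v w \<le> 1) \<and>
     (\<forall>a\<in>A. 0 \<le> y a \<and> y a \<le> 1) \<and>
     (\<forall>v\<in>V. \<forall>w\<in>insert None (Some ` A).
        x v w = measure I {b \<in> space I. demand A pref p v b = w}) \<and>
     (\<forall>v\<in>V. \<forall>a\<in>A. s * x v (Some a) \<le> y a \<and>
        (s * x v (Some a) < y a \<longrightarrow> p v (Some a) = 0)) \<and>
     (\<Sum>a\<in>A. y a) = B \<and>
     (\<forall>z. (\<forall>a\<in>A. 0 \<le> z a \<and> z a \<le> 1) \<and> (\<Sum>a\<in>A. z a) = B \<longrightarrow>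
        (\<Sum>a\<in>A. (\<Sum>v\<in>V. p v (Some a)) * z a) \<le> (\<Sum>a\<in>A. (\<Sum>v\<in>V. p v (Some a)) * y a))"

definition boundary :: "'a set \<Rightarrow> ('v \<Rightarrow> 'a \<Rightarrow> 'a \<Rightarrow> bool) \<Rightarrow> ('v \<Rightarrow> 'a option \<Rightarrow> real)
    \<Rightarrow> real \<Rightarrow> 'v \<Rightarrow> 'a option" where
  "boundary A pref p \<epsilon> v = pref_max pref v (affordable A (p v) (1 - \<epsilon>))"

definition t_covered :: "'a set \<Rightarrow> ('v \<Rightarrow> 'a \<Rightarrow> 'a \<Rightarrow> bool) \<Rightarrow> ('v \<Rightarrow> 'a option \<Rightarrow> real)
    \<Rightarrow> real \<Rightarrow> nat \<Rightarrow> 'a set \<Rightarrow> 'v \<Rightarrow> bool" where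
  "t_covered A pref p \<epsilon> t C v \<longleftrightarrow>
     card {c \<in> C. ext_pref pref v (Some c) (boundary A pref p \<epsilon> v)} \<ge> t"

definition beats_t :: "('v \<Rightarrow> 'a \<Rightarrow> 'a \<Rightarrow> bool) \<Rightarrow> nat \<Rightarrow> 'v \<Rightarrow> 'a \<Rightarrow> 'a set \<Rightarrow> bool" where
  "beats_t pref t v a C \<longleftrightarrow> \<not> (card {c \<in> C. pref v c a} \<ge> t)"

end

theory Submission
  imports Defs
begin

lemma slo_irrefl: "strict_linear_on A r \<Longrightarrow> a \<in> A \<Longrightarrow> \<not> r a a"
  unfolding strict_linear_on_def by simp
lemma slo_trans: assumes "strict_linear_on A r" "a \<in> A" "b \<in> A" "c \<in> A" "r a b" "r b c" shows "r a c"
proof -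
  have "\<forall>a\<in>A. \<forall>b\<in>A. \<forall>c\<in>A. r a b \<longrightarrow> r b c \<longrightarrow> r a c" using assms(1) unfolding strict_linear_on_def by (elim conjE)
  then show ?thesis using assms(2-6) by blast
qed
lemma slo_total: assumes "strict_linear_on A r" "a \<in> A" "b \<in> A" "a \<noteq> b" shows "r a b \<or> r b a"
proof -
  have "\<forall>a\<in>A. \<forall>b\<in>A. a \<noteq> b \<longrightarrow> r a b \<or> r b a" using assms(1) unfolding strict_linear_on_def by (elim conjE)
  then show ?thesis using assms(2-4) by blast
qed
lemma slo_asym: "strict_linear_on A r \<Longrightarrow> a \<in> A \<Longrightarrow> b \<in> A \<Longrightarrow> r a b \<Longrightarrow> \<not> r b a"
  using slo_irrefl slo_trans by metis

lemma opt_cases: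
  assumes "w \<in> insert None (Some ` A)"
  obtains "w = None" | a where "w = Some a" "a \<in> A"
  using assms by blast

lemma ext_pref_asym:
  assumes "strict_linear_on A (pref v)" "w1 \<in> insert None (Some ` A)" "w2 \<in> insert None (Some ` A)"
    "ext_pref pref v w1 w2"
  shows "\<not> ext_pref pref v w2 w1"
proof -
  from assms(2) show ?thesis
  proof (cases rule: opt_cases)
    case 1 then show ?thesis using assms(4) by simp
  next
    case (2 a)
    from assms(3) show ?thesis
    proof (cases rule: opt_cases)
      case 1 then show ?thesis by simp
    next
      case (2 b)
      have "pref v a b" using assms(4) \<open>w1 = Some a\<close> \<open>w2 = Some b\<close> by simp
      then have "\<not> pref v b a" by (rule slo_asym[OF assms(1) \<open>a \<in> A\<close> \<open>b \<in> A\<close>])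
      then show ?thesis using \<open>w1 = Some a\<close> \<open>w2 = Some b\<close> by simp
    qed
  qed
qed

lemma ext_pref_total:
  assumes "strict_linear_on A (pref v)" "w1 \<in> insert None (Some ` A)" "w2 \<in> insert None (Some ` A)"
    "w1 \<noteq> w2"
  shows "ext_pref pref v w1 w2 \<or> ext_pref pref v w2 w1"
proof -
  from assms(2) show ?thesis
  proof (cases rule: opt_cases)
    case 1 then show ?thesis using assms(3,4) by (cases w2) auto
  next
    case (2 a)
    from assms(3) show ?thesis
    proof (cases rule: opt_cases)
      case 1 then show ?thesis using \<open>w1 = Some a\<close> by simp
    next
      case (2 b)
      have "a \<noteq> b" using assms(4) \<open>w1 = Some a\<close> \<open>w2 = Some b\<close> by simp
      then have "pref v a b \<or> pref v b a" by (rule slo_total[OF assms(1) \<open>a \<in> A\<close> \<open>b \<in> A\<close>])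
      then show ?thesis using \<open>w1 = Some a\<close> \<open>w2 = Some b\<close> by simp
    qed
  qed
qed

lemma ext_pref_trans:
  assumes "strict_linear_on A (pref v)" "w1 \<in> insert None (Some ` A)" "w2 \<in> insert None (Some ` A)"
    "w3 \<in> insert None (Some ` A)" "ext_pref pref v w1 w2" "ext_pref pref v w2 w3"
  shows "ext_pref pref v w1 w3"
proof -
  from assms(2) show ?thesis
  proof (cases rule: opt_cases)
    case 1 then show ?thesis using assms(5) by simp
  next
    case (2 a)
    from assms(3) show ?thesis
    proof (cases rule: opt_cases)
      case 1 then show ?thesis using assms(6) by simp
    next
      case (2 b)
      from assms(4) show ?thesis
      proof (cases rule: opt_cases)
        case 1 then show ?thesis using \<open>w1 = Some a\<close> by simp
      next
        case (2 c)
        have "pref v a b" "pref v b c" using assms(5,6) \<open>w1 = Some a\<close> \<open>w2 = Some b\<close> \<open>w3 = Some c\<close> by simp_all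
        then have "pref v a c" using slo_trans[OF assms(1) \<open>a \<in> A\<close> \<open>b \<in> A\<close> \<open>c \<in> A\<close>] by blast
        then show ?thesis using \<open>w1 = Some a\<close> \<open>w3 = Some c\<close> by simp
      qed
    qed
  qed
qed


lemma max_exists:
  assumes "strict_linear_on A (pref v)" "finite S" "S \<noteq> {}" "S \<subseteq> insert None (Some ` A)"
  shows "\<exists>m\<in>S. \<forall>w\<in>S. w \<noteq> m \<longrightarrow> ext_pref pref v m w"
  using assms(2,3,4)
proof (induction S rule: finite_ne_induct)
  case (singleton x) then show ?case by auto
next
  case (insert x F)
  then obtain m where m: "m \<in> F" "\<forall>w\<in>F. w \<noteq> m \<longrightarrow> ext_pref pref v m w" by auto
  have xU: "x \<in> insert None (Some ` A)" and mU: "m \<in> insert None (Some ` A)" using insert m by auto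
  show ?case
  proof (cases "ext_pref pref v m x")
    case True then show ?thesis using m by auto
  next
    case False
    have "x \<noteq> m" using insert m by auto
    then have xm: "ext_pref pref v x m" using ext_pref_total[where pref=pref and v=v, OF assms(1) xU mU] False by blast
    have "\<forall>w\<in>insert x F. w \<noteq> x \<longrightarrow> ext_pref pref v x w"
    proof
      fix w assume w: "w \<in> insert x F"
      show "w \<noteq> x \<longrightarrow> ext_pref pref v x w"
      proof
        assume "w \<noteq> x"
        then have wF: "w \<in> F" using w by simp
        show "ext_pref pref v x w"
        proof (cases "w = m")
          case True then show ?thesis using xm by simp
        next
          case False
          then have "ext_pref pref v m w" using m wF by blast
          moreover have "w \<in> insert None (Some ` A)" using insert wF by blast
          ultimately show ?thesis using ext_pref_trans[where pref=pref and v=v, OF assms(1) xU mU _ xm] by blast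
        qed
      qed
    qed
    then show ?thesis by blast
  qed
qed

lemma pref_max_prop:
  assumes "strict_linear_on A (pref v)" "finite S" "S \<noteq> {}" "S \<subseteq> insert None (Some ` A)"
  shows "pref_max pref v S \<in> S \<and> (\<forall>w\<in>S. w \<noteq> pref_max pref v S \<longrightarrow> ext_pref pref v (pref_max pref v S) w)"
proof -
  obtain m where m: "m \<in> S" "\<forall>w\<in>S. w \<noteq> m \<longrightarrow> ext_pref pref v m w" using max_exists[where pref=pref and v=v, OF assms] by blast
  have "pref_max pref v S = m" unfolding pref_max_def
  proof (rule the_equality)
    show "m \<in> S \<and> (\<forall>w\<in>S. w \<noteq> m \<longrightarrow> ext_pref pref v m w)" using m by auto
  next
    fix m' assume h: "m' \<in> S \<and> (\<forall>w\<in>S. w \<noteq> m' \<longrightarrow> ext_pref pref v m' w)"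
    show "m' = m"
    proof (rule ccontr)
      assume "m' \<noteq> m"
      then have "ext_pref pref v m' m" "ext_pref pref v m m'" using h m by auto
      moreover have "m' \<in> insert None (Some ` A)" "m \<in> insert None (Some ` A)" using h m assms(4) by blast+
      ultimately show False using ext_pref_asym[where pref=pref and v=v, OF assms(1)] by blast
    qed
  qed
  then show ?thesis using m by auto
qed

lemma pref_max_eq:
  assumes "strict_linear_on A (pref v)" "finite S" "S \<subseteq> insert None (Some ` A)"
   "m \<in> S" "\<forall>w\<in>S. w \<noteq> m \<longrightarrow> ext_pref pref v m w"
  shows "pref_max pref v S = m"
proof -
  have "S \<noteq> {}" using assms by auto
  note P = pref_max_prop[where pref=pref and v=v, OF assms(1,2) this assms(3)]
  show ?thesis
  proof (rule ccontr)
    assume ne: "pref_max pref v S \<noteq> m"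
    then have "ext_pref pref v (pref_max pref v S) m" "ext_pref pref v m (pref_max pref v S)"
      using P assms by auto
    moreover have "pref_max pref v S \<in> insert None (Some ` A)" "m \<in> insert None (Some ` A)" using P assms(3,4) by blast+
    ultimately show False using ext_pref_asym[where pref=pref and v=v, OF assms(1)] by blast
  qed
qed

lemma affordable_fin: "finite A \<Longrightarrow> finite (affordable A pv b)"
  unfolding affordable_def by auto

lemma affordable_sub: "affordable A pv b \<subseteq> insert None (Some ` A)"
  unfolding affordable_def by auto

lemma affordable_None: "pv None = 0 \<Longrightarrow> 0 \<le> b \<Longrightarrow> None \<in> affordable A pv b"
  unfolding affordable_def by auto

lemma demand_char:
  assumes "strict_linear_on A (pref v)" "finite A" "p v None = 0" "0 \<le> b"
  shows "demand A pref p v b = w \<longleftrightarrow>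
     (w \<in> insert None (Some ` A) \<and> p v w \<le> b \<and>
      (\<forall>w'\<in>insert None (Some ` A). p v w' \<le> b \<longrightarrow> w' \<noteq> w \<longrightarrow> ext_pref pref v w w'))"
proof -
  let ?S = "affordable A (p v) b"
  have ne: "?S \<noteq> {}" using affordable_None[of "p v" b A] assms by auto
  note P = pref_max_prop[where pref=pref and v=v, OF assms(1) affordable_fin[OF assms(2)] ne affordable_sub]
  show ?thesis
  proof
    assume "demand A pref p v b = w"
    then show "(w \<in> insert None (Some ` A) \<and> p v w \<le> b \<and>
      (\<forall>w'\<in>insert None (Some ` A). p v w' \<le> b \<longrightarrow> w' \<noteq> w \<longrightarrow> ext_pref pref v w w'))"
      using P unfolding demand_def affordable_def by auto
  next
    assume h: "(w \<in> insert None (Some ` A) \<and> p v w \<le> b \<and>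
      (\<forall>w'\<in>insert None (Some ` A). p v w' \<le> b \<longrightarrow> w' \<noteq> w \<longrightarrow> ext_pref pref v w w'))"
    show "demand A pref p v b = w" unfolding demand_def
      apply (rule pref_max_eq[where pref=pref and v=v, OF assms(1) affordable_fin[OF assms(2)] affordable_sub])
      using h unfolding affordable_def by auto
  qed
qed

lemma demand_meas:
  assumes "strict_linear_on A (pref v)" "finite A" "p v None = 0" "\<forall>a\<in>A. 0 \<le> p v (Some a)"
  shows "{b. demand A pref p v b = w} \<in> sets borel"
proof -
  define d0 where "d0 = demand A pref p v (-1)"
  have neg: "demand A pref p v b = d0" if "b < 0" for b
  proof -
    have "affordable A (p v) b = affordable A (p v) (-1)"
      unfolding affordable_def using assms(3,4) that by force
    then show ?thesis unfolding d0_def demand_def by simp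
  qed
  let ?U = "insert None (Some ` A)"
  have eq: "{b. demand A pref p v b = w} =
     {b. b < 0 \<and> d0 = w} \<union> {b. 0 \<le> b \<and> w \<in> ?U \<and> p v w \<le> b \<and>
      (\<forall>w'\<in>?U. p v w' \<le> b \<longrightarrow> w' \<noteq> w \<longrightarrow> ext_pref pref v w w')}"
  proof (rule set_eqI)
    fix b :: real
    show "b \<in> {b. demand A pref p v b = w} \<longleftrightarrow> b \<in> {b. b < 0 \<and> d0 = w} \<union> {b. 0 \<le> b \<and> w \<in> ?U \<and> p v w \<le> b \<and>
      (\<forall>w'\<in>?U. p v w' \<le> b \<longrightarrow> w' \<noteq> w \<longrightarrow> ext_pref pref v w w')}"
    proof (cases "b < 0")
      case True
      then show ?thesis using neg[OF True] by simp
    next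
      case False
      then have b0: "0 \<le> b" by simp
      show ?thesis using demand_char[where pref=pref and v=v and p=p and w=w, OF assms(1-3) b0] False by simp
    qed
  qed
  have fU: "finite ?U" using assms by auto
  have "{b. 0 \<le> b \<and> w \<in> ?U \<and> p v w \<le> b \<and>
      (\<forall>w'\<in>?U. p v w' \<le> b \<longrightarrow> w' \<noteq> w \<longrightarrow> ext_pref pref v w w')} \<in> sets borel"
    using fU by measurable
  moreover have "{b::real. b < 0 \<and> d0 = w} \<in> sets borel" by measurable
  ultimately show ?thesis unfolding eq by blast
qed

lemma voter_bound:
  fixes I :: "real measure"
  assumes slo: "strict_linear_on A (pref v)" and fA: "finite A" and p0: "p v None = 0"
    and pnn: "\<forall>a\<in>A. 0 \<le> p v (Some a)" and ps: "prob_space I" and sI: "sets I = sets borel"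
    and spI: "space I = UNIV" and ae: "AE b in I. 0 \<le> b" and intb: "integrable I (\<lambda>b. b)"
  shows "(\<Sum>a\<in>A. p v (Some a) * measure I {b \<in> space I. demand A pref p v b = Some a}) \<le> (\<integral>b. b \<partial>I)"
proof -
  let ?S = "\<lambda>a. {b. demand A pref p v b = Some a}"
  have meas: "?S a \<in> sets I" for a using demand_meas[where pref=pref and v=v and p=p, OF slo fA p0 pnn] sI by simp
  have fin: "emeasure I (?S a) < \<infinity>" for a
  proof -
    interpret prob_space I by (rule ps)
    show ?thesis by (simp add: less_top[symmetric])
  qed
  have intS: "integrable I (\<lambda>b. p v (Some a) * indicator (?S a) b)" for a
    using meas fin by auto
  have "(\<Sum>a\<in>A. p v (Some a) * measure I {b \<in> space I. demand A pref p v b = Some a})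
      = (\<Sum>a\<in>A. (\<integral>b. p v (Some a) * indicator (?S a) b \<partial>I))"
    using spI by simp
  also have "\<dots> = (\<integral>b. (\<Sum>a\<in>A. p v (Some a) * indicator (?S a) b) \<partial>I)"
    using Bochner_Integration.integral_sum[where I=A and M=I and f="\<lambda>a b. p v (Some a) * indicator (?S a) b", OF intS] by (rule sym)
  also have "\<dots> \<le> (\<integral>b. b \<partial>I)"
  proof (rule integral_mono_AE)
    show "integrable I (\<lambda>b. \<Sum>a\<in>A. p v (Some a) * indicator (?S a) b)" using intS by auto
    show "integrable I (\<lambda>b. b)" by fact
    show "AE b in I. (\<Sum>a\<in>A. p v (Some a) * indicator (?S a) b) \<le> b"
      using ae
    proof eventually_elim
      case (elim b)
      note D = demand_char[where pref=pref and v=v and p=p, OF slo fA p0 elim, of "demand A pref p v b", simplified]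
      show ?case
      proof (cases "demand A pref p v b")
        case None
        then show ?thesis using elim by (simp add: indicator_def)
      next
        case (Some a0)
        then have "(\<Sum>a\<in>A. p v (Some a) * indicator (?S a) b) = (\<Sum>a\<in>A. if a = a0 then p v (Some a) else 0)"
          by (intro sum.cong) (auto simp: indicator_def)
        also have "\<dots> = p v (Some a0)"
        proof -
          have "a0 \<in> A" using Some D by auto
          then show ?thesis using fA by (simp add: sum.delta')
        qed
        also have "\<dots> \<le> b" using Some D by auto
        finally show ?thesis .
      qed
    qed
  qed
  finally show ?thesis .
qed

theorem mainTheorem11:
  fixes V :: "'v set" and A :: "'a set" and pref :: "'v \<Rightarrow> 'a \<Rightarrow> 'a \<Rightarrow> bool"
    and \<gamma> \<epsilon> B :: real and t :: nat and C :: "'a set" and c :: 'a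
    and x p :: "'v \<Rightarrow> 'a option \<Rightarrow> real" and y :: "'a \<Rightarrow> real"
  assumes "election V A pref"
    and "\<gamma> \<ge> 1" and "t \<ge> 1" and "0 < \<epsilon>" and "\<epsilon> < 1"
    and "\<gamma> * t \<le> B" and "B \<le> card A"
    and "SLEO V A pref (\<gamma> * t) (uniform_measure lborel {1 - \<epsilon>..1}) B x y p"
    and "C \<subseteq> A" and "card C \<ge> t" and "\<forall>a\<in>A. y a = 1 \<longrightarrow> a \<in> C"
    and "c \<in> A - C"
  shows "((\<Sum>v\<in>V. p v (Some c))
           \<le> \<gamma> * t * card V * (1 / B) * (\<integral>b. b \<partial>(uniform_measure lborel {1 - \<epsilon>..1}))) \<and>
         real (card {v \<in> V. t_covered A pref p \<epsilon> t C v \<and> beats_t pref t v c C})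
           \<le> \<gamma> * t / (B * (1 - \<epsilon>)) * card V"
proof -
  let ?I = "uniform_measure lborel {1 - \<epsilon>..1}"
  let ?s = "\<gamma> * real t"
  let ?E = "\<integral>b. b \<partial>?I"
  define P where "P a = (\<Sum>v\<in>V. p v (Some a))" for a
  note el = assms(1)[unfolded election_def]
  have fV: "finite V" and fA: "finite A" and slo: "\<And>v. v \<in> V \<Longrightarrow> strict_linear_on A (pref v)"
    using el by auto
  note S = assms(8)[unfolded SLEO_def]
  have p0: "\<And>v. v \<in> V \<Longrightarrow> p v None = 0" and pnn: "\<And>v a. v \<in> V \<Longrightarrow> a \<in> A \<Longrightarrow> 0 \<le> p v (Some a)"
    and ple1: "\<And>v a. v \<in> V \<Longrightarrow> a \<in> A \<Longrightarrow> p v (Some a) \<le> 1"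
    using S by auto
  have y01: "\<And>a. a \<in> A \<Longrightarrow> 0 \<le> y a \<and> y a \<le> 1" using S by auto
  have xdef: "\<And>v a. v \<in> V \<Longrightarrow> a \<in> A \<Longrightarrow> x v (Some a) = measure ?I {b \<in> space ?I. demand A pref p v b = Some a}"
    using S by auto
  have comp: "\<And>v a. v \<in> V \<Longrightarrow> a \<in> A \<Longrightarrow> ?s * x v (Some a) \<le> y a \<and> (?s * x v (Some a) < y a \<longrightarrow> p v (Some a) = 0)"
    using S by auto
  have sumy: "(\<Sum>a\<in>A. y a) = B" using S by auto
  have opt: "\<And>z. (\<forall>a\<in>A. 0 \<le> z a \<and> z a \<le> 1) \<Longrightarrow> (\<Sum>a\<in>A. z a) = B \<Longrightarrow>
        (\<Sum>a\<in>A. P a * z a) \<le> (\<Sum>a\<in>A. P a * y a)"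
    using S unfolding P_def by blast
  have t1: "1 \<le> real t" using assms(3) by simp
  have "1 * 1 \<le> \<gamma> * real t" by (rule mult_mono) (use assms(2) t1 in auto)
  then have Bpos: "B > 0" using assms(6) by simp
  have cA: "c \<in> A" and cC: "c \<notin> C" using assms(12) by auto
  have yc: "y c < 1" using y01[OF cA] assms(11) cA cC by force
  have Pc: "P c \<le> P a" if aA: "a \<in> A" and ya: "0 < y a" for a
  proof (rule ccontr)
    assume "\<not> P c \<le> P a"
    then have lt: "P a < P c" by simp
    then have ac: "a \<noteq> c" by auto
    define \<delta> where "\<delta> = min (y a) (1 - y c)"
    have dpos: "\<delta> > 0" using ya yc unfolding \<delta>_def by auto
    define z where "z a' = y a' + (if a' = c then \<delta> else 0) - (if a' = a then \<delta> else 0)" for a'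
    have z01: "\<forall>a'\<in>A. 0 \<le> z a' \<and> z a' \<le> 1"
    proof
      fix a' assume "a' \<in> A"
      then show "0 \<le> z a' \<and> z a' \<le> 1" using y01[of a'] y01[OF aA] y01[OF cA] ya yc ac unfolding z_def \<delta>_def by (auto simp: min_def)
    qed
    have "(\<Sum>a'\<in>A. z a') = (\<Sum>a'\<in>A. y a') + (\<Sum>a'\<in>A. (if a' = c then \<delta> else 0)) - (\<Sum>a'\<in>A. (if a' = a then \<delta> else 0))"
      unfolding z_def by (simp add: sum.distrib sum_subtractf)
    also have "\<dots> = B" using sumy cA aA fA by simp
    finally have zB: "(\<Sum>a'\<in>A. z a') = B" .
    have "(\<Sum>a'\<in>A. P a' * z a') = (\<Sum>a'\<in>A. P a' * y a') + (\<Sum>a'\<in>A. (if a' = c then P a' * \<delta> else 0)) - (\<Sum>a'\<in>A. (if a' = a then P a' * \<delta> else 0))"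
    proof -
      have "(\<Sum>a'\<in>A. P a' * z a') = (\<Sum>a'\<in>A. P a' * y a' + (if a' = c then P a' * \<delta> else 0) - (if a' = a then P a' * \<delta> else 0))"
        by (rule sum.cong) (auto simp: z_def algebra_simps)
      then show ?thesis by (simp only: sum.distrib sum_subtractf)
    qed
    also have "\<dots> = (\<Sum>a'\<in>A. P a' * y a') + \<delta> * (P c - P a)" using cA aA fA by (simp add: sum.delta' algebra_simps)
    finally have "(\<Sum>a'\<in>A. P a' * z a') > (\<Sum>a'\<in>A. P a' * y a')" using dpos lt by simp
    then show False using opt[OF z01 zB] by simp
  qed
  have Pnn: "P a \<ge> 0" if "a \<in> A" for a unfolding P_def using pnn that by (simp add: sum_nonneg)
  have step3: "P c * B \<le> (\<Sum>a\<in>A. P a * y a)"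
  proof -
    have "P c * B = (\<Sum>a\<in>A. P c * y a)" using sumy by (metis sum_distrib_left)
    also have "\<dots> \<le> (\<Sum>a\<in>A. P a * y a)"
    proof (rule sum_mono)
      fix a assume aA: "a \<in> A"
      show "P c * y a \<le> P a * y a"
      proof (cases "y a = 0")
        case True then show ?thesis by simp
      next
        case False then have "y a > 0" using y01[OF aA] by auto
        then show ?thesis using Pc[OF aA] by (simp add: mult_right_mono)
      qed
    qed
    finally show ?thesis .
  qed
  have step4: "(\<Sum>a\<in>A. P a * y a) = ?s * (\<Sum>v\<in>V. \<Sum>a\<in>A. p v (Some a) * x v (Some a))"
  proof -
    have "(\<Sum>a\<in>A. P a * y a) = (\<Sum>a\<in>A. \<Sum>v\<in>V. p v (Some a) * y a)"
      unfolding P_def by (simp add: sum_distrib_right)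
    also have "\<dots> = (\<Sum>a\<in>A. \<Sum>v\<in>V. ?s * (p v (Some a) * x v (Some a)))"
    proof (intro sum.cong refl)
      fix a v assume aA: "a \<in> A" and vV: "v \<in> V"
      show "p v (Some a) * y a = ?s * (p v (Some a) * x v (Some a))"
        using comp[OF vV aA] by (cases "?s * x v (Some a) < y a") auto
    qed
    also have "\<dots> = ?s * (\<Sum>v\<in>V. \<Sum>a\<in>A. p v (Some a) * x v (Some a))"
      by (subst sum.swap) (simp add: sum_distrib_left)
    finally show ?thesis .
  qed
  have emeas: "emeasure lborel {1 - \<epsilon>..1::real} = ennreal \<epsilon>" using assms(4) by simp
  have ps: "prob_space ?I"
    by (rule prob_space_uniform_measure) (use emeas assms(4) in auto)
  have aeI: "AE b in ?I. 1 - \<epsilon> \<le> b \<and> b \<le> 1"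
    by (rule AE_uniform_measureI) auto
  have ae0: "AE b in ?I. 0 \<le> b" using aeI by eventually_elim (use assms(5) in auto)
  have intb: "integrable ?I (\<lambda>b. b)"
  proof -
    interpret prob_space ?I by (rule ps)
    have "AE b in ?I. norm b \<le> 1" using aeI by eventually_elim (use assms(5) in auto)
    then show ?thesis by (intro integrable_const_bound[where B=1]) auto
  qed
  have E1: "?E \<le> 1"
  proof -
    interpret prob_space ?I by (rule ps)
    have "?E \<le> (\<integral>b. 1 \<partial>?I)"
      by (rule integral_mono_AE[OF intb]) (use aeI in auto)
    then show ?thesis using prob_space by simp
  qed
  have step5: "(\<Sum>a\<in>A. p v (Some a) * x v (Some a)) \<le> ?E" if vV: "v \<in> V" for v
  proof -
    have "(\<Sum>a\<in>A. p v (Some a) * x v (Some a)) =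
      (\<Sum>a\<in>A. p v (Some a) * measure ?I {b \<in> space ?I. demand A pref p v b = Some a})"
      using xdef[OF vV] by simp
    also have "\<dots> \<le> ?E"
      by (rule voter_bound[where pref=pref and v=v and p=p, OF slo[OF vV] fA p0[OF vV] _ ps _ _ ae0 intb]) (use pnn vV in auto)
    finally show ?thesis .
  qed
  have spos: "?s \<ge> 0" using assms(2) by simp
  have "P c * B \<le> ?s * (\<Sum>v\<in>V. ?E)"
  proof -
    have "(\<Sum>v\<in>V. \<Sum>a\<in>A. p v (Some a) * x v (Some a)) \<le> (\<Sum>v\<in>V. ?E)"
      by (rule sum_mono) (rule step5)
    then have "?s * (\<Sum>v\<in>V. \<Sum>a\<in>A. p v (Some a) * x v (Some a)) \<le> ?s * (\<Sum>v\<in>V. ?E)"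
      by (rule mult_left_mono) (rule spos)
    then show ?thesis using step3 step4 by linarith
  qed
  then have PcB: "P c * B \<le> ?s * card V * ?E" by simp
  have part1: "P c \<le> ?s * card V * (1 / B) * ?E"
    using PcB Bpos by (simp add: field_simps)
  let ?W = "{v \<in> V. t_covered A pref p \<epsilon> t C v \<and> beats_t pref t v c C}"
  have big: "p v (Some c) > 1 - \<epsilon>" if vW: "v \<in> ?W" for v
  proof -
    have vV: "v \<in> V" using vW by auto
    let ?Af = "affordable A (p v) (1 - \<epsilon>)"
    have ne: "?Af \<noteq> {}" using affordable_None[of "p v" "1 - \<epsilon>" A] p0[OF vV] assms(5) by auto
    note M = pref_max_prop[where pref=pref and v=v, OF slo[OF vV] affordable_fin[OF fA] ne affordable_sub]
    let ?m = "boundary A pref p \<epsilon> v"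
    have mdef: "?m = pref_max pref v ?Af" unfolding boundary_def by simp
    have cov: "card {c' \<in> C. ext_pref pref v (Some c') ?m} \<ge> t" using vW unfolding t_covered_def by auto
    have bt: "\<not> card {c' \<in> C. pref v c' c} \<ge> t" using vW unfolding beats_t_def by auto
    have fC: "finite C" using assms(9) fA finite_subset by auto
    have mU: "?m \<in> insert None (Some ` A)" using M mdef affordable_sub by auto
    have cm: "ext_pref pref v (Some c) ?m"
    proof (cases ?m)
      case None then show ?thesis by simp
    next
      case (Some a)
      then have aA: "a \<in> A" using mU by auto
      have "pref v c a"
      proof (rule ccontr)
        assume np: "\<not> pref v c a"
        have sub: "{c' \<in> C. ext_pref pref v (Some c') ?m} \<subseteq> {c' \<in> C. pref v c' c}"
        proof
          fix c' assume h: "c' \<in> {c' \<in> C. ext_pref pref v (Some c') ?m}"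
          then have c'A: "c' \<in> A" and pc': "pref v c' a" using Some assms(9) by auto
          show "c' \<in> {c' \<in> C. pref v c' c}"
          proof (cases "a = c")
            case True then show ?thesis using h pc' by auto
          next
            case False
            then have "pref v a c" using np slo_total[OF slo[OF vV] aA cA] by blast
            then have "pref v c' c" using slo_trans[OF slo[OF vV] c'A aA cA pc'] by blast
            then show ?thesis using h by auto
          qed
        qed
        have "card {c' \<in> C. ext_pref pref v (Some c') ?m} \<le> card {c' \<in> C. pref v c' c}"
          by (rule card_mono) (use fC sub in auto)
        then show False using cov bt by auto
      qed
      then show ?thesis using Some by simp
    qed
    show ?thesis
    proof (rule ccontr)
      assume "\<not> 1 - \<epsilon> < p v (Some c)"
      then have "Some c \<in> ?Af" unfolding affordable_def using cA by auto
      moreover have "Some c \<noteq> ?m"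
      proof
        assume "Some c = ?m"
        then have "pref v c c" using cm by (metis ext_pref.simps(1))
        then show False using slo_irrefl[OF slo[OF vV] cA] by blast
      qed
      ultimately have "ext_pref pref v ?m (Some c)" using M mdef by auto
      moreover have cU: "Some c \<in> insert None (Some ` A)" using cA by blast
      ultimately show False using ext_pref_asym[where pref=pref and v=v, OF slo[OF vV] cU mU cm] by blast
    qed
  qed
  have fW: "finite ?W" using fV by auto
  have "real (card ?W) * (1 - \<epsilon>) = (\<Sum>v\<in>?W. (1 - \<epsilon>))" by simp
  also have "\<dots> \<le> (\<Sum>v\<in>?W. p v (Some c))" by (rule sum_mono) (use big in force)
  also have "\<dots> \<le> (\<Sum>v\<in>V. p v (Some c))"
    by (rule sum_mono2[OF fV]) (use pnn cA in auto)
  also have "\<dots> = P c" unfolding P_def ..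
  also have "\<dots> \<le> ?s * card V * (1 / B) * ?E" by (rule part1)
  also have "\<dots> \<le> ?s * card V * (1 / B) * 1"
    by (rule mult_left_mono[OF E1]) (use spos Bpos in auto)
  finally have "real (card ?W) * (1 - \<epsilon>) \<le> ?s * card V / B" by simp
  then have part2: "real (card ?W) \<le> ?s / (B * (1 - \<epsilon>)) * card V"
    using Bpos assms(5) by (simp add: field_simps)
  show ?thesis using part1 part2 unfolding P_def by simp
qed

end
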